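(* Let $R$ be a commutative ring with $1_R$ which is torsion free (an integral domain), let $M$ be a torsion free $R$-module, and let $\mathbf f$ be an endomorphism of $M$. Suppose: (b) $\mathbf f$ maps $\varphi_0(M)$ onto $\varphi_0(M)$; (d) $\varphi_\varepsilon(x)$, for $\varepsilon\le\varepsilon_*$, are formulas of $\mathscr{L}_{\infty,\aleph_0}(\tau_R)$ generated from atomic formulas by $\exists$ and $\wedge$ (existential positive); (e) $\langle\varphi_\varepsilon(M):\varepsilon\le\varepsilon_*\rangle$ is a $\subseteq$-decreasing continuous sequence of submodules of $M$; (f) $\varphi_{\varepsilon_*}(M)=\{0_M\}$; (g) for each $\varepsilon<\varepsilon_*$, $\varphi_\varepsilon(M)/\varphi_{\varepsilon+1}(M)$ is torsion free of rank $1$, hence isomorphic to a sub-$R$-module of $\mathbb Q_R$; (h) $x_\varepsilon\in\varphi_\varepsilon(M)\setminus\varphi_{\varepsilon+1}(M)$ for $\varepsilon<\varepsilon_*$; (i) $\varphi_0(M)=\mathrm{PC}_M(\{x_\varepsilon:\varepsilon<\varepsilon_*\})$. Then $\mathbf f\restriction\varphi_0(M)$ is one-to-one.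
   Context: $\tau_R$ is the vocabulary of $R$-modules ($+,-,0$ and unary multiplication by each $r\in R$). $\mathbb Q_R$ is the field of fractions of $R$. A decreasing sequence indexed by $\varepsilon\le\varepsilon_*$ is continuous if at each limit $\delta$ the $\delta$-th term is the intersection of the earlier terms. A submodule $N\subseteq M$ is pure if $rN=rM\cap N$ for all $r\in R$; $\mathrm{PC}_M(Y)$ denotes the minimal pure submodule of $M$ containing $Y$. $\varphi(M)=\{a\in M:M\models\varphi[a]\}$. *)

theory Defs
  imports Complex_Main
begin

datatype 'r trm =
    Var nat
  | Zero
  | Plus "'r trm" "'r trm"
  | Minus "'r trm" "'r trm"
  | Neg "'r trm"
  | Smul 'r "'r trm"

text \<open>A conjunction is indexed by the (arbitrary)
  type 'i; smaller conjunctions are obtained by repetition.\<close>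
datatype ('r, 'i) epform =
    Eq "'r trm" "'r trm"
  | Ex nat "('r, 'i) epform"
  | Conj "'i \<Rightarrow> ('r, 'i) epform"

primrec tfv :: "'r trm \<Rightarrow> nat set" where
  "tfv (Var n) = {n}"
| "tfv Zero = {}"
| "tfv (Plus s t) = tfv s \<union> tfv t"
| "tfv (Minus s t) = tfv s \<union> tfv t"
| "tfv (Neg t) = tfv t"
| "tfv (Smul r t) = tfv t"

primrec ffv :: "('r, 'i) epform \<Rightarrow> nat set" where
  "ffv (Eq s t) = tfv s \<union> tfv t"
| "ffv (Ex n \<phi>) = ffv \<phi> - {n}"
| "ffv (Conj g) = (\<Union>i. ffv (g i))"

primrec teval :: "('r \<Rightarrow> 'm::ab_group_add \<Rightarrow> 'm) \<Rightarrow> (nat \<Rightarrow> 'm) \<Rightarrow> 'r trm \<Rightarrow> 'm" where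
  "teval sc v (Var n) = v n"
| "teval sc v Zero = 0"
| "teval sc v (Plus s t) = teval sc v s + teval sc v t"
| "teval sc v (Minus s t) = teval sc v s - teval sc v t"
| "teval sc v (Neg t) = - teval sc v t"
| "teval sc v (Smul r t) = sc r (teval sc v t)"

primrec sat :: "('r \<Rightarrow> 'm::ab_group_add \<Rightarrow> 'm) \<Rightarrow> ('r, 'i) epform \<Rightarrow> (nat \<Rightarrow> 'm) \<Rightarrow> bool" where
  "sat sc (Eq s t) = (\<lambda>v. teval sc v s = teval sc v t)"
| "sat sc (Ex n \<phi>) = (\<lambda>v. \<exists>a. sat sc \<phi> (v(n := a)))"
| "sat sc (Conj g) = (\<lambda>v. \<forall>i. sat sc (g i) v)"

text \<open>A formula phi(x) in the single free variable x = Var 0; phi(M) is the set it defines.\<close>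
definition defset :: "('r \<Rightarrow> 'm::ab_group_add \<Rightarrow> 'm) \<Rightarrow> ('r, 'i) epform \<Rightarrow> 'm set" where
  "defset sc \<phi> = {a. sat sc \<phi> ((\<lambda>_. 0)(0 := a))}"

definition torsion_free_module :: "('r::idom \<Rightarrow> 'm::ab_group_add \<Rightarrow> 'm) \<Rightarrow> bool" where
  "torsion_free_module sc \<longleftrightarrow> (\<forall>r a. r \<noteq> 0 \<longrightarrow> sc r a = 0 \<longrightarrow> a = 0)"

definition pure_submodule :: "('r::comm_ring_1 \<Rightarrow> 'm::ab_group_add \<Rightarrow> 'm) \<Rightarrow> 'm set \<Rightarrow> bool" where
  "pure_submodule sc N \<longleftrightarrow> module.subspace sc N \<and>
     (\<forall>r. sc r ` N = sc r ` UNIV \<inter> N)"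

definition PC :: "('r::comm_ring_1 \<Rightarrow> 'm::ab_group_add \<Rightarrow> 'm) \<Rightarrow> 'm set \<Rightarrow> 'm set" where
  "PC sc Y = \<Inter>{N. pure_submodule sc N \<and> Y \<subseteq> N}"

text \<open>The quotient A/B (B a submodule of A) is torsion free of rank 1:
  torsion free, nonzero, and any two elements are linearly dependent.\<close>
definition quot_tf_rank1 :: "('r::idom \<Rightarrow> 'm::ab_group_add \<Rightarrow> 'm) \<Rightarrow> 'm set \<Rightarrow> 'm set \<Rightarrow> bool" where
  "quot_tf_rank1 sc A B \<longleftrightarrow>
     (\<forall>r a. r \<noteq> 0 \<longrightarrow> a \<in> A \<longrightarrow> sc r a \<in> B \<longrightarrow> a \<in> B) \<and>
     (\<exists>a\<in>A. a \<notin> B) \<and>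
     (\<forall>a\<in>A. \<forall>b\<in>A. \<exists>r s. (r \<noteq> 0 \<or> s \<noteq> 0) \<and> sc r a - sc s b \<in> B)"

definition osucc :: "'o::wellorder \<Rightarrow> 'o" where
  "osucc e = (LEAST e'. e < e')"

definition is_limit :: "'o::wellorder \<Rightarrow> bool" where
  "is_limit d \<longleftrightarrow> (\<exists>e. e < d) \<and> (\<forall>e<d. \<exists>e'. e < e' \<and> e' < d)"

end

theory Submission
  imports Defs
begin

lemma teval_hom:
  assumes "module_hom sc sc f"
  shows "teval sc (\<lambda>i. f (v i)) t = f (teval sc v t)"
proof -
  interpret module_hom sc sc f by fact
  show ?thesis by (induction t) (auto simp: add diff neg scale)
qed

lemma sat_hom:
  assumes "module_hom sc sc f"
  shows "sat sc \<phi> v \<Longrightarrow> sat sc \<phi> (\<lambda>i. f (v i))"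
proof (induction \<phi> arbitrary: v)
  case (Eq s t)
  then show ?case by (simp add: teval_hom[OF assms])
next
  case (Ex n \<phi>)
  then obtain a where "sat sc \<phi> (v(n := a))" by auto
  from Ex.IH[OF this] have "sat sc \<phi> ((\<lambda>i. f (v i))(n := f a))"
    by (simp add: fun_upd_def if_distrib)
  then show ?case by auto
next
  case (Conj g)
  then show ?case by auto
qed

lemma defset_hom:
  assumes "module_hom sc sc f" and "a \<in> defset sc \<phi>"
  shows "f a \<in> defset sc \<phi>"
proof -
  interpret module_hom sc sc f by fact
  have "sat sc \<phi> (\<lambda>i. f (((\<lambda>_. 0)(0 := a)) i))"
    using sat_hom[OF assms(1)] assms(2) unfolding defset_def by blast
  moreover have "(\<lambda>i. f (((\<lambda>_. 0)(0 := a)) i)) = (\<lambda>_. 0)(0 := f a)" by (auto simp: fun_eq_iff)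
  ultimately show ?thesis unfolding defset_def by (metis mem_Collect_eq)
qed

theorem lemma6p3:
  fixes sc :: "'r::idom \<Rightarrow> 'm::ab_group_add \<Rightarrow> 'm"
    and f :: "'m \<Rightarrow> 'm"
    and \<phi> :: "'o::{wellorder,order_bot} \<Rightarrow> ('r, 'i) epform"
    and estar :: "'o"
    and x :: "'o \<Rightarrow> 'm"
  assumes M: "module sc"
    and tf: "torsion_free_module sc"
    and endo: "module_hom sc sc f"
    and b: "f ` defset sc (\<phi> bot) = defset sc (\<phi> bot)"
    and d: "\<And>e. e \<le> estar \<Longrightarrow> ffv (\<phi> e) \<subseteq> {0}"
    and e_sub: "\<And>e. e \<le> estar \<Longrightarrow> module.subspace sc (defset sc (\<phi> e))"
    and e_dec: "\<And>e e'. e \<le> e' \<Longrightarrow> e' \<le> estar \<Longrightarrow> defset sc (\<phi> e') \<subseteq> defset sc (\<phi> e)"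
    and e_cont: "\<And>d. d \<le> estar \<Longrightarrow> is_limit d \<Longrightarrow>
                   defset sc (\<phi> d) = (\<Inter>e\<in>{e. e < d}. defset sc (\<phi> e))"
    and f_zero: "defset sc (\<phi> estar) = {0}"
    and g: "\<And>e. e < estar \<Longrightarrow> quot_tf_rank1 sc (defset sc (\<phi> e)) (defset sc (\<phi> (osucc e)))"
    and h: "\<And>e. e < estar \<Longrightarrow> x e \<in> defset sc (\<phi> e) - defset sc (\<phi> (osucc e))"
    and i: "defset sc (\<phi> bot) = PC sc (x ` {e. e < estar})"
  shows "inj_on f (defset sc (\<phi> bot))"
proof -
  interpret fm: module_hom sc sc f by fact
  let ?D = "\<lambda>e. defset sc (\<phi> e)"
  have succ_lt: "e < osucc e" if "e < estar" for e
    unfolding osucc_def using that by (rule LeastI)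
  have succ_le: "osucc e \<le> estar" if "e < estar" for e
    unfolding osucc_def using that by (rule Least_le)
  have succ_min: "osucc e \<le> e'" if "e < e'" for e e'
    unfolding osucc_def using that by (rule Least_le)
  have pres: "f a \<in> ?D e" if "a \<in> ?D e" for a e
    using defset_hom[OF endo that] .
  have lev: "\<exists>d<estar. y \<in> ?D d \<and> y \<notin> ?D (osucc d)" if y: "y \<in> ?D bot" "y \<noteq> 0" for y
  proof -
    let ?S = "{e. e \<le> estar \<and> y \<notin> ?D e}"
    have "estar \<in> ?S" using f_zero y by auto
    define m where "m = (LEAST e. e \<in> ?S)"
    have mS: "m \<in> ?S" unfolding m_def by (rule LeastI) fact
    have mmin: "\<And>e. e \<in> ?S \<Longrightarrow> m \<le> e" unfolding m_def by (rule Least_le)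
    have below: "y \<in> ?D e" if "e < m" for e
    proof (rule ccontr)
      assume "y \<notin> ?D e"
      with that mS have "e \<in> ?S" by auto
      with mmin[OF this] that show False by auto
    qed
    have "m \<noteq> bot" using mS y by auto
    hence bm: "bot < m" using bot_less by blast
    have "\<not> is_limit m"
    proof
      assume "is_limit m"
      with e_cont[of m] mS below have "y \<in> ?D m" by auto
      with mS show False by auto
    qed
    with bm obtain e where em: "e < m" and nb: "\<forall>e'. e < e' \<longrightarrow> \<not> e' < m"
      unfolding is_limit_def by blast
    have "osucc e = m"
    proof (rule antisym)
      show "osucc e \<le> m" using succ_min[OF em] .
      show "m \<le> osucc e"
      proof (rule ccontr)
        assume "\<not> m \<le> osucc e"
        hence "osucc e < m" by simp
        moreover have "e < osucc e" unfolding osucc_def using em by (rule LeastI)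
        ultimately show False using nb by blast
      qed
    qed
    moreover have mle: "m \<le> estar" and ynm: "y \<notin> ?D m" using mS by simp_all
    moreover have "e < estar" using em mle by (rule less_le_trans)
    ultimately show ?thesis using below[OF em] by metis
  qed
  have zero_all: "f b \<in> ?D (osucc e)"
    if ee: "e < estar" and a: "a \<in> ?D e" "a \<notin> ?D (osucc e)" "f a \<in> ?D (osucc e)"
       and b: "b \<in> ?D e" for e a b
  proof -
    have G: "quot_tf_rank1 sc (?D e) (?D (osucc e))" using g[OF ee] .
    have B: "module.subspace sc (?D (osucc e))" using e_sub[OF succ_le[OF ee]] .
    from G b a(1) obtain r s where rs: "r \<noteq> 0 \<or> s \<noteq> 0" "sc r b - sc s a \<in> ?D (osucc e)"
      unfolding quot_tf_rank1_def by blast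
    have tfq: "\<And>r c. r \<noteq> 0 \<Longrightarrow> c \<in> ?D e \<Longrightarrow> sc r c \<in> ?D (osucc e) \<Longrightarrow> c \<in> ?D (osucc e)"
      using G unfolding quot_tf_rank1_def by blast
    have r0: "r \<noteq> 0"
    proof
      assume r: "r = 0"
      with rs have s: "s \<noteq> 0" by auto
      from rs(2) r have "- sc s a \<in> ?D (osucc e)" by simp
      hence "sc s a \<in> ?D (osucc e)" using module.subspace_neg[OF M B] by fastforce
      with tfq[OF s a(1)] a(2) show False by blast
    qed
    have "f (sc r b - sc s a) \<in> ?D (osucc e)" using pres rs(2) by blast
    hence "sc r (f b) - sc s (f a) \<in> ?D (osucc e)" by (simp add: fm.diff fm.scale)
    moreover have "sc s (f a) \<in> ?D (osucc e)" using module.subspace_scale[OF M B a(3)] .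
    ultimately have "sc r (f b) \<in> ?D (osucc e)"
      using module.subspace_add[OF M B] by fastforce
    with tfq[OF r0 pres[OF b]] show ?thesis .
  qed
  define Z where "Z = {e. e < estar \<and> (\<exists>a\<in>?D e. a \<notin> ?D (osucc e) \<and> f a \<in> ?D (osucc e))}"
  have Zdesc: "\<exists>d\<in>Z. d < e" if eZ: "e \<in> Z" for e
  proof -
    from eZ obtain a where ee: "e < estar" and a: "a \<in> ?D e" "a \<notin> ?D (osucc e)" "f a \<in> ?D (osucc e)"
      unfolding Z_def by blast
    have xe: "x e \<in> ?D e" "x e \<notin> ?D (osucc e)" using h[OF ee] by auto
    have "x e \<in> ?D bot" using e_dec[OF bot_least less_imp_le[OF ee]] xe(1) by (rule subsetD)
    hence "x e \<in> f ` ?D bot" using b by simp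
    then obtain y where y1: "y \<in> ?D bot" and y2: "x e = f y" by (rule imageE)
    have z0: "0 \<in> ?D (osucc e)" using module.subspace_0[OF M e_sub[OF succ_le[OF ee]]] .
    have yn0: "y \<noteq> 0"
    proof
      assume "y = 0"
      hence "x e = 0" using y2 by simp
      with z0 xe(2) show False by simp
    qed
    from lev[OF y1 yn0] obtain d where d: "d < estar" "y \<in> ?D d" "y \<notin> ?D (osucc d)" by blast
    show ?thesis
    proof (cases "e \<le> d")
      case True
      have "y \<in> ?D e" using e_dec[OF True less_imp_le[OF d(1)]] d(2) by (rule subsetD)
      from zero_all[OF ee a this] y2 xe(2) have False by simp
      then show ?thesis ..
    next
      case False
      hence de: "d < e" by (simp add: not_le)
      have "?D e \<subseteq> ?D (osucc d)" using e_dec[OF succ_min[OF de] less_imp_le[OF ee]] .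
      hence fy: "f y \<in> ?D (osucc d)" using xe(1)[unfolded y2] by (rule subsetD)
      have "d \<in> Z" unfolding Z_def
        by (intro CollectI conjI bexI[of _ y] d(1) d(3) fy d(2))
      with de show ?thesis by blast
    qed
  qed
  have Zempty: "Z = {}"
  proof (rule ccontr)
    assume "Z \<noteq> {}"
    then obtain z where "z \<in> Z" by blast
    define m where "m = (LEAST e. e \<in> Z)"
    have "m \<in> Z" unfolding m_def by (rule LeastI) fact
    from Zdesc[OF this] obtain d where "d \<in> Z" "d < m" by blast
    moreover have "m \<le> d" unfolding m_def by (rule Least_le) fact
    ultimately show False by auto
  qed
  show ?thesis
  proof (rule inj_onI)
    fix u v assume u: "u \<in> ?D bot" and v: "v \<in> ?D bot" and fuv: "f u = f v"
    show "u = v"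
    proof (rule ccontr)
      assume "u \<noteq> v"
      hence nz: "u - v \<noteq> 0" by simp
      have Bs: "module.subspace sc (?D bot)" using e_sub[of bot] by simp
      have uv: "u - v \<in> ?D bot" using module.subspace_diff[OF M Bs u v] .
      from lev[OF uv nz] obtain d where d: "d < estar" "u - v \<in> ?D d" "u - v \<notin> ?D (osucc d)" by blast
      have "f (u - v) = 0" using fuv by (simp add: fm.diff)
      moreover have "0 \<in> ?D (osucc d)" using module.subspace_0[OF M e_sub[OF succ_le[OF d(1)]]] .
      ultimately have "d \<in> Z" using d unfolding Z_def by auto
      with Zempty show False by auto
    qed
  qed
qed

end
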